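(* Consider a mean-variance team stochastic game as described in the context and run Algorithm MV-MAPI (described in the context) from any deterministic initial joint policy. Then $J(\hat{\boldsymbol{\mu}}^{(k,0)})\le J(\hat{\boldsymbol{\mu}}^{(k,1)})\le\cdots\le J(\hat{\boldsymbol{\mu}}^{(k,N)})$ for every outer iteration $k$, so the sequence $(J(\boldsymbol{\mu}^{(k)}))_k$ is monotonically non-decreasing; the algorithm converges, and the joint policy $\tilde{\boldsymbol{\mu}}$ it converges to (the returned joint policy) is a first-order stationary point, i.e. for every agent $i\in\mathcal{N}$ and every $\mu_i\in\mathcal{U}_i$, $\frac{\mathrm{d}}{\mathrm{d}\delta}J\big((1-\delta)\tilde{\mu}_i+\delta\mu_i,\tilde{\boldsymbol{\mu}}_{-i}\big)\big|_{\delta=0}\le 0$ (right derivative).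
   Context: Game: finite agents $\mathcal{N}=\{1,\dots,N\}$, finite state space $\mathcal{S}$, finite action sets $\mathcal{A}_i$, $\mathcal{A}=\prod_i\mathcal{A}_i$, transition kernel $P(s'|s,\boldsymbol{a})$, common reward $r:\mathcal{S}\times\mathcal{A}\to\mathbb{R}$. Policies $\mu_i:\mathcal{S}\to\Delta(\mathcal{A}_i)$ (set $\mathcal{U}_i$); joint policies $\boldsymbol{\mu}\in\mathcal{U}=\prod_i\mathcal{U}_i$ with $\boldsymbol{\mu}(\boldsymbol{a}|s)=\prod_i\mu_i(a_i|s)$; $(\mu_i,\boldsymbol{\mu}_{-i})$ means agent $i$ uses $\mu_i$, others use $\boldsymbol{\mu}_{-i}$; $(1-\delta)\tilde\mu_i+\delta\mu_i$ is the policy $s\mapsto(1-\delta)\tilde\mu_i(\cdot|s)+\delta\mu_i(\cdot|s)$. Standing assumption: the chain $P^{\boldsymbol{\mu}}(s'|s)=\sum_{\boldsymbol{a}}\boldsymbol{\mu}(\boldsymbol{a}|s)P(s'|s,\boldsymbol{a})$ is ergodic for every $\boldsymbol{\mu}\in\mathcal{U}$, stationary distribution $\pi^{\boldsymbol{\mu}}$. $\eta^{\boldsymbol{\mu}}=\sum_s\pi^{\boldsymbol{\mu}}(s)\sum_{\boldsymbol{a}}\boldsymbol{\mu}(\boldsymbol{a}|s)r(s,\boldsymbol{a})$; $\zeta^{\boldsymbol{\mu}}=\sum_s\pi^{\boldsymbol{\mu}}(s)\sum_{\boldsymbol{a}}\boldsymbol{\mu}(\boldsymbol{a}|s)(r(s,\boldsymbol{a})-\eta^{\boldsymbol{\mu}})^2$;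 for fixed $\beta\ge0$, $J(\boldsymbol{\mu})=\eta^{\boldsymbol{\mu}}-\beta\zeta^{\boldsymbol{\mu}}$. $f^{\boldsymbol{\mu}}(s,\boldsymbol{a})=r(s,\boldsymbol{a})-\beta(r(s,\boldsymbol{a})-\eta^{\boldsymbol{\mu}})^2$, $f^{\boldsymbol{\mu}}(s)=\sum_{\boldsymbol{a}}\boldsymbol{\mu}(\boldsymbol{a}|s)f^{\boldsymbol{\mu}}(s,\boldsymbol{a})$; $V_f^{\boldsymbol{\mu}}$ solves $V(s)=f^{\boldsymbol{\mu}}(s)-J(\boldsymbol{\mu})+\sum_{s'}P^{\boldsymbol{\mu}}(s'|s)V(s')$ (unique up to an additive constant); $Q_f^{\boldsymbol{\mu}}(s,\boldsymbol{a})=f^{\boldsymbol{\mu}}(s,\boldsymbol{a})-J(\boldsymbol{\mu})+\sum_{s'}P(s'|s,\boldsymbol{a})V_f^{\boldsymbol{\mu}}(s')$, $A_f^{\boldsymbol{\mu}}=Q_f^{\boldsymbol{\mu}}-V_f^{\boldsymbol{\mu}}$. Algorithm MV-MAPI: start with a deterministic joint policy $\boldsymbol{\mu}^{(0)}$. For $k=0,1,\dots$: set $\hat{\boldsymbol{\mu}}^{(k,0)}=\boldsymbol{\mu}^{(k)}$ and draw a random permutation $i_1,\dots,i_N$ of the agents. For $h=1,\dots,N$: compute $A_f^{\hat{\boldsymbol{\mu}}^{(k,h-1)}}$ and, for every $s$, set $\mu^{(k+1)}_{i_h}(s)$ to be an action $a_{i_h}$ maximizing $\mathbb{E}_{\boldsymbol{a}_{-i_h}\sim\hat{\boldsymbol{\mu}}^{(k,h-1)}_{-i_h}(\cdot|s)}\big[A_f^{\hat{\boldsymbol{\mu}}^{(k,h-1)}}(s,a_{i_h},\boldsymbol{a}_{-i_h})\big]$,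 choosing $\mu^{(k+1)}_{i_h}(s)=\mu^{(k)}_{i_h}(s)$ whenever $\mu^{(k)}_{i_h}(s)$ already attains the maximum; then set $\hat{\boldsymbol{\mu}}^{(k,h)}=(\mu^{(k+1)}_{i_1},\dots,\mu^{(k+1)}_{i_h},\mu^{(k)}_{i_{h+1}},\dots,\mu^{(k)}_{i_N})$. If $\mu^{(k+1)}_i=\mu^{(k)}_i$ for all $i$, stop and return $\boldsymbol{\mu}^{(k)}$; otherwise set $\boldsymbol{\mu}^{(k+1)}=\hat{\boldsymbol{\mu}}^{(k,N)}$ and continue. *)

theory Defs
  imports "HOL-Analysis.Analysis"
begin

text \<open>Agents: finite type 'i. States: finite type 's. Actions of agent i: finite
  nonempty set A i of elements of type 'a.
  A (stochastic) policy of agent i is a map p :: 's \<Rightarrow> 'a \<Rightarrow> real with p s a the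
  probability of a in state s.\<close>

definition jointA :: "('i::finite \<Rightarrow> 'a set) \<Rightarrow> ('i \<Rightarrow> 'a) set" where
  "jointA A = Pi\<^sub>E UNIV A"

definition is_policy :: "('i \<Rightarrow> 'a set) \<Rightarrow> 'i \<Rightarrow> ('s \<Rightarrow> 'a \<Rightarrow> real) \<Rightarrow> bool" where
  "is_policy A i p \<longleftrightarrow> (\<forall>s a. 0 \<le> p s a) \<and> (\<forall>s a. a \<notin> A i \<longrightarrow> p s a = 0)
     \<and> (\<forall>s. (\<Sum>a\<in>A i. p s a) = 1)"

definition is_joint_policy :: "('i \<Rightarrow> 'a set) \<Rightarrow> ('i \<Rightarrow> 's \<Rightarrow> 'a \<Rightarrow> real) \<Rightarrow> bool" where
  "is_joint_policy A mu \<longleftrightarrow> (\<forall>i. is_policy A i (mu i))"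

definition valid_game :: "('i::finite \<Rightarrow> 'a set) \<Rightarrow> ('s::finite \<Rightarrow> ('i \<Rightarrow> 'a) \<Rightarrow> 's \<Rightarrow> real) \<Rightarrow> bool" where
  "valid_game A P \<longleftrightarrow> (\<forall>i. finite (A i) \<and> A i \<noteq> {})
     \<and> (\<forall>s b. b \<in> jointA A \<longrightarrow> (\<forall>s'. 0 \<le> P s b s') \<and> (\<Sum>s'\<in>UNIV. P s b s') = 1)"

definition jprob :: "('i::finite \<Rightarrow> 's \<Rightarrow> 'a \<Rightarrow> real) \<Rightarrow> 's \<Rightarrow> ('i \<Rightarrow> 'a) \<Rightarrow> real" where
  "jprob mu s b = (\<Prod>i\<in>UNIV. mu i s (b i))"

definition Pmu :: "('i::finite \<Rightarrow> 'a set) \<Rightarrow> ('s \<Rightarrow> ('i \<Rightarrow> 'a) \<Rightarrow> 's \<Rightarrow> real)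
     \<Rightarrow> ('i \<Rightarrow> 's \<Rightarrow> 'a \<Rightarrow> real) \<Rightarrow> 's \<Rightarrow> 's \<Rightarrow> real" where
  "Pmu A P mu s s' = (\<Sum>b\<in>jointA A. jprob mu s b * P s b s')"

fun mpow :: "('s::finite \<Rightarrow> 's \<Rightarrow> real) \<Rightarrow> nat \<Rightarrow> 's \<Rightarrow> 's \<Rightarrow> real" where
  "mpow M 0 = (\<lambda>s s'. if s = s' then 1 else 0)"
| "mpow M (Suc n) = (\<lambda>s s'. \<Sum>t\<in>UNIV. mpow M n s t * M t s')"

definition irreducible_chain :: "('s::finite \<Rightarrow> 's \<Rightarrow> real) \<Rightarrow> bool" where
  "irreducible_chain M \<longleftrightarrow> (\<forall>s s'. \<exists>n. 0 < mpow M n s s')"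

definition aperiodic_chain :: "('s::finite \<Rightarrow> 's \<Rightarrow> real) \<Rightarrow> bool" where
  "aperiodic_chain M \<longleftrightarrow> (\<forall>s. Gcd {n. 0 < n \<and> 0 < mpow M n s s} = 1)"

definition ergodic_chain :: "('s::finite \<Rightarrow> 's \<Rightarrow> real) \<Rightarrow> bool" where
  "ergodic_chain M \<longleftrightarrow> irreducible_chain M \<and> aperiodic_chain M"

text \<open>The (unique, under ergodicity) stationary distribution.\<close>
definition stat_dist :: "('s::finite \<Rightarrow> 's \<Rightarrow> real) \<Rightarrow> 's \<Rightarrow> real" where
  "stat_dist M = (THE pi. (\<forall>s. 0 \<le> pi s) \<and> (\<Sum>s\<in>UNIV. pi s) = 1
                      \<and> (\<forall>s'. (\<Sum>s\<in>UNIV. pi s * M s s') = pi s'))"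

definition eta :: "('i::finite \<Rightarrow> 'a set) \<Rightarrow> ('s::finite \<Rightarrow> ('i \<Rightarrow> 'a) \<Rightarrow> 's \<Rightarrow> real)
     \<Rightarrow> ('s \<Rightarrow> ('i \<Rightarrow> 'a) \<Rightarrow> real) \<Rightarrow> ('i \<Rightarrow> 's \<Rightarrow> 'a \<Rightarrow> real) \<Rightarrow> real" where
  "eta A P r mu = (\<Sum>s\<in>UNIV. stat_dist (Pmu A P mu) s *
                    (\<Sum>b\<in>jointA A. jprob mu s b * r s b))"

definition zeta :: "('i::finite \<Rightarrow> 'a set) \<Rightarrow> ('s::finite \<Rightarrow> ('i \<Rightarrow> 'a) \<Rightarrow> 's \<Rightarrow> real)
     \<Rightarrow> ('s \<Rightarrow> ('i \<Rightarrow> 'a) \<Rightarrow> real) \<Rightarrow> ('i \<Rightarrow> 's \<Rightarrow> 'a \<Rightarrow> real) \<Rightarrow> real" where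
  "zeta A P r mu = (\<Sum>s\<in>UNIV. stat_dist (Pmu A P mu) s *
                    (\<Sum>b\<in>jointA A. jprob mu s b * (r s b - eta A P r mu)\<^sup>2))"

definition Jmv :: "('i::finite \<Rightarrow> 'a set) \<Rightarrow> ('s::finite \<Rightarrow> ('i \<Rightarrow> 'a) \<Rightarrow> 's \<Rightarrow> real)
     \<Rightarrow> ('s \<Rightarrow> ('i \<Rightarrow> 'a) \<Rightarrow> real) \<Rightarrow> real \<Rightarrow> ('i \<Rightarrow> 's \<Rightarrow> 'a \<Rightarrow> real) \<Rightarrow> real" where
  "Jmv A P r \<beta> mu = eta A P r mu - \<beta> * zeta A P r mu"

definition fmv :: "('i::finite \<Rightarrow> 'a set) \<Rightarrow> ('s::finite \<Rightarrow> ('i \<Rightarrow> 'a) \<Rightarrow> 's \<Rightarrow> real)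
     \<Rightarrow> ('s \<Rightarrow> ('i \<Rightarrow> 'a) \<Rightarrow> real) \<Rightarrow> real \<Rightarrow> ('i \<Rightarrow> 's \<Rightarrow> 'a \<Rightarrow> real) \<Rightarrow> 's \<Rightarrow> ('i \<Rightarrow> 'a) \<Rightarrow> real" where
  "fmv A P r \<beta> mu s b = r s b - \<beta> * (r s b - eta A P r mu)\<^sup>2"

definition fbar :: "('i::finite \<Rightarrow> 'a set) \<Rightarrow> ('s::finite \<Rightarrow> ('i \<Rightarrow> 'a) \<Rightarrow> 's \<Rightarrow> real)
     \<Rightarrow> ('s \<Rightarrow> ('i \<Rightarrow> 'a) \<Rightarrow> real) \<Rightarrow> real \<Rightarrow> ('i \<Rightarrow> 's \<Rightarrow> 'a \<Rightarrow> real) \<Rightarrow> 's \<Rightarrow> real" where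
  "fbar A P r \<beta> mu s = (\<Sum>b\<in>jointA A. jprob mu s b * fmv A P r \<beta> mu s b)"

text \<open>A solution of the Poisson equation (unique up to an additive constant under
  ergodicity; the advantage below does not depend on the choice).\<close>
definition Vf :: "('i::finite \<Rightarrow> 'a set) \<Rightarrow> ('s::finite \<Rightarrow> ('i \<Rightarrow> 'a) \<Rightarrow> 's \<Rightarrow> real)
     \<Rightarrow> ('s \<Rightarrow> ('i \<Rightarrow> 'a) \<Rightarrow> real) \<Rightarrow> real \<Rightarrow> ('i \<Rightarrow> 's \<Rightarrow> 'a \<Rightarrow> real) \<Rightarrow> 's \<Rightarrow> real" where
  "Vf A P r \<beta> mu = (SOME V. \<forall>s. V s = fbar A P r \<beta> mu s - Jmv A P r \<beta> mu
                        + (\<Sum>s'\<in>UNIV. Pmu A P mu s s' * V s'))"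

definition Qf :: "('i::finite \<Rightarrow> 'a set) \<Rightarrow> ('s::finite \<Rightarrow> ('i \<Rightarrow> 'a) \<Rightarrow> 's \<Rightarrow> real)
     \<Rightarrow> ('s \<Rightarrow> ('i \<Rightarrow> 'a) \<Rightarrow> real) \<Rightarrow> real \<Rightarrow> ('i \<Rightarrow> 's \<Rightarrow> 'a \<Rightarrow> real) \<Rightarrow> 's \<Rightarrow> ('i \<Rightarrow> 'a) \<Rightarrow> real" where
  "Qf A P r \<beta> mu s b = fmv A P r \<beta> mu s b - Jmv A P r \<beta> mu
                        + (\<Sum>s'\<in>UNIV. P s b s' * Vf A P r \<beta> mu s')"

definition Af :: "('i::finite \<Rightarrow> 'a set) \<Rightarrow> ('s::finite \<Rightarrow> ('i \<Rightarrow> 'a) \<Rightarrow> 's \<Rightarrow> real)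
     \<Rightarrow> ('s \<Rightarrow> ('i \<Rightarrow> 'a) \<Rightarrow> real) \<Rightarrow> real \<Rightarrow> ('i \<Rightarrow> 's \<Rightarrow> 'a \<Rightarrow> real) \<Rightarrow> 's \<Rightarrow> ('i \<Rightarrow> 'a) \<Rightarrow> real" where
  "Af A P r \<beta> mu s b = Qf A P r \<beta> mu s b - Vf A P r \<beta> mu s"

definition exp_adv :: "('i::finite \<Rightarrow> 'a set) \<Rightarrow> ('s::finite \<Rightarrow> ('i \<Rightarrow> 'a) \<Rightarrow> 's \<Rightarrow> real)
     \<Rightarrow> ('s \<Rightarrow> ('i \<Rightarrow> 'a) \<Rightarrow> real) \<Rightarrow> real \<Rightarrow> ('i \<Rightarrow> 's \<Rightarrow> 'a \<Rightarrow> real) \<Rightarrow> 'i \<Rightarrow> 's \<Rightarrow> 'a \<Rightarrow> real" where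
  "exp_adv A P r \<beta> mu i s a =
     (\<Sum>b\<in>{b\<in>jointA A. b i = a}. (\<Prod>j\<in>UNIV - {i}. mu j s (b j)) * Af A P r \<beta> mu s b)"

definition det_joint :: "('i \<Rightarrow> 's \<Rightarrow> 'a) \<Rightarrow> 'i \<Rightarrow> 's \<Rightarrow> 'a \<Rightarrow> real" where
  "det_joint d = (\<lambda>i s a. if a = d i s then 1 else 0)"

definition mix_pol :: "real \<Rightarrow> ('s \<Rightarrow> 'a \<Rightarrow> real) \<Rightarrow> ('s \<Rightarrow> 'a \<Rightarrow> real) \<Rightarrow> 's \<Rightarrow> 'a \<Rightarrow> real" where
  "mix_pol \<delta> p q = (\<lambda>s a. (1 - \<delta>) * p s a + \<delta> * q s a)"

definition first_order_stationary :: "('i::finite \<Rightarrow> 'a set) \<Rightarrow> ('s::finite \<Rightarrow> ('i \<Rightarrow> 'a) \<Rightarrow> 's \<Rightarrow> real)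
     \<Rightarrow> ('s \<Rightarrow> ('i \<Rightarrow> 'a) \<Rightarrow> real) \<Rightarrow> real \<Rightarrow> ('i \<Rightarrow> 's \<Rightarrow> 'a \<Rightarrow> real) \<Rightarrow> bool" where
  "first_order_stationary A P r \<beta> mu \<longleftrightarrow>
     (\<forall>i p. is_policy A i p \<longrightarrow>
        (\<exists>D. ((\<lambda>\<delta>. Jmv A P r \<beta> (mu(i := mix_pol \<delta> (mu i) p))) has_real_derivative D)
                (at 0 within {0..1}) \<and> D \<le> 0))"

text \<open>Intermediate policies hat-mu^(k,h) of MV-MAPI: d k is mu^(k) (deterministic),
  perm k the permutation i_1..i_N drawn in iteration k.\<close>
definition hat_pol :: "(nat \<Rightarrow> 'i \<Rightarrow> 's \<Rightarrow> 'a) \<Rightarrow> (nat \<Rightarrow> 'i list) \<Rightarrow> nat \<Rightarrow> nat \<Rightarrow> 'i \<Rightarrow> 's \<Rightarrow> 'a" where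
  "hat_pol d perm k h = (\<lambda>j. if j \<in> set (take h (perm k)) then d (Suc k) j else d k j)"

text \<open>A run of MV-MAPI (for any realisation of the random permutations and any
  admissible choice among maximisers).  After the stopping iteration the
  sequence stays constant, so runs are modelled as infinite sequences.\<close>
definition mvmapi_run :: "('i::finite \<Rightarrow> 'a set) \<Rightarrow> ('s::finite \<Rightarrow> ('i \<Rightarrow> 'a) \<Rightarrow> 's \<Rightarrow> real)
     \<Rightarrow> ('s \<Rightarrow> ('i \<Rightarrow> 'a) \<Rightarrow> real) \<Rightarrow> real \<Rightarrow> (nat \<Rightarrow> 'i \<Rightarrow> 's \<Rightarrow> 'a) \<Rightarrow> (nat \<Rightarrow> 'i list) \<Rightarrow> bool" where
  "mvmapi_run A P r \<beta> d perm \<longleftrightarrow>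
     (\<forall>i s. d 0 i s \<in> A i) \<and>
     (\<forall>k. distinct (perm k) \<and> set (perm k) = UNIV) \<and>
     (\<forall>k h. h < length (perm k) \<longrightarrow>
        (let i = perm k ! h; mu = det_joint (hat_pol d perm k h) in
         \<forall>s. d (Suc k) i s \<in> A i
           \<and> (\<forall>a\<in>A i. exp_adv A P r \<beta> mu i s a \<le> exp_adv A P r \<beta> mu i s (d (Suc k) i s))
           \<and> ((\<forall>a\<in>A i. exp_adv A P r \<beta> mu i s a \<le> exp_adv A P r \<beta> mu i s (d k i s))
                 \<longrightarrow> d (Suc k) i s = d k i s)))"

end

theory Submission
  imports Defs
begin

definition stoch :: "('s::finite \<Rightarrow> 's \<Rightarrow> real) \<Rightarrow> bool" where
  "stoch M \<longleftrightarrow> (\<forall>s t. 0 \<le> M s t) \<and> (\<forall>s. (\<Sum>t\<in>UNIV. M s t) = 1)"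

definition stationary :: "('s::finite \<Rightarrow> 's \<Rightarrow> real) \<Rightarrow> ('s \<Rightarrow> real) \<Rightarrow> bool" where
  "stationary M pd \<longleftrightarrow> (\<forall>s. 0 \<le> pd s) \<and> (\<Sum>s\<in>UNIV. pd s) = 1
                      \<and> (\<forall>s'. (\<Sum>s\<in>UNIV. pd s * M s s') = pd s')"

lemma sum_ind: "(\<Sum>s\<in>(UNIV::'s::finite set). f s * (if s = a then 1 else (0::real))) = f a"
proof -
  have "(\<Sum>s\<in>(UNIV::'s set). f s * (if s = a then 1 else (0::real))) = (\<Sum>s\<in>UNIV. if s = a then f s else 0)"
    by (rule sum.cong) auto
  then show ?thesis by simp
qed

lemma mpow_nonneg: "stoch M \<Longrightarrow> 0 \<le> mpow M n s t"
  by (induction n arbitrary: t) (auto simp: stoch_def intro!: sum_nonneg)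

lemma mpow_stat: "stationary M pd \<Longrightarrow> (\<Sum>s\<in>UNIV. pd s * mpow M n s t) = pd t"
proof (induction n arbitrary: t)
  case 0
  show ?case by (simp add: sum_ind)
next
  case (Suc n)
  have "(\<Sum>s\<in>UNIV. pd s * mpow M (Suc n) s t) = (\<Sum>s\<in>UNIV. \<Sum>u\<in>UNIV. pd s * mpow M n s u * M u t)"
    by (simp add: sum_distrib_left mult.assoc)
  also have "\<dots> = (\<Sum>u\<in>UNIV. (\<Sum>s\<in>UNIV. pd s * mpow M n s u) * M u t)"
    by (subst sum.swap) (simp add: sum_distrib_right)
  also have "\<dots> = (\<Sum>u\<in>UNIV. pd u * M u t)" using Suc.IH[OF Suc.prems] by simp
  also have "\<dots> = pd t" using Suc.prems by (simp add: stationary_def)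
  finally show ?case .
qed

lemma stat_apply:
  assumes "stationary M pd"
  shows "(\<Sum>s\<in>UNIV. pd s * (\<Sum>t\<in>UNIV. M s t * f t)) = (\<Sum>t\<in>UNIV. pd t * f t)"
proof -
  have "(\<Sum>s\<in>UNIV. pd s * (\<Sum>t\<in>UNIV. M s t * f t)) = (\<Sum>t\<in>UNIV. (\<Sum>s\<in>UNIV. pd s * M s t) * f t)"
    by (simp add: sum_distrib_left sum_distrib_right mult.assoc) (rule sum.swap)
  also have "\<dots> = (\<Sum>t\<in>UNIV. pd t * f t)" using assms by (simp add: stationary_def)
  finally show ?thesis .
qed

lemma harmonic_const:
  assumes st: "stoch M" and irr: "irreducible_chain M"
    and h: "\<And>s. V s = (\<Sum>t\<in>UNIV. M s t * V t)"
  shows "V s = V s'"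
proof -
  define m where "m = Max (range V)"
  have le: "V t \<le> m" for t unfolding m_def by simp
  have "m \<in> range V" unfolding m_def by (rule Max_in) auto
  then obtain s0 where s0: "V s0 = m" by auto
  have propg: "V t = m" if Mp: "M u t > 0" and Vu: "V u = m" for u t
  proof -
    have "(\<Sum>w\<in>UNIV. M u w * (m - V w)) = m * (\<Sum>w\<in>UNIV. M u w) - (\<Sum>w\<in>UNIV. M u w * V w)"
      by (simp add: algebra_simps sum_subtractf sum_distrib_left sum_distrib_right)
    also have "\<dots> = 0" using st h[of u] Vu by (simp add: stoch_def)
    finally have z: "(\<Sum>w\<in>UNIV. M u w * (m - V w)) = 0" .
    have nn: "\<forall>w\<in>UNIV. 0 \<le> M u w * (m - V w)" using st le by (simp add: stoch_def)
    have "M u t * (m - V t) = 0" using sum_nonneg_eq_0_iff[of UNIV "\<lambda>w. M u w * (m - V w)"] nn z by simp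
    with Mp le show "V t = m" by simp
  qed
  have reach: "0 < mpow M n s0 t \<Longrightarrow> V t = m" for n t
  proof (induction n arbitrary: t)
    case 0 then show ?case using s0 by (simp split: if_splits)
  next
    case (Suc n)
    have "0 < (\<Sum>u\<in>UNIV. mpow M n s0 u * M u t)" using Suc.prems by simp
    then obtain u where u: "0 < mpow M n s0 u * M u t"
      by (meson not_le sum_nonpos)
    have "0 \<le> mpow M n s0 u" "0 \<le> M u t" using st mpow_nonneg by (auto simp: stoch_def)
    with u have "0 < mpow M n s0 u" "0 < M u t" by (auto simp: zero_less_mult_iff)
    then show ?case using Suc.IH propg by blast
  qed
  have all: "V t = m" for t
  proof -
    obtain n where "0 < mpow M n s0 t" using irr unfolding irreducible_chain_def by blast
    then show ?thesis by (rule reach)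
  qed
  show ?thesis using all[of s] all[of s'] by simp
qed

lemma stat_exists:
  assumes st: "stoch (M::'s::finite \<Rightarrow> 's \<Rightarrow> real)"
  shows "\<exists>pd. stationary M pd"
proof -
  define L where "L = (\<lambda>x::real^'s. \<chi> t. x$t - (\<Sum>s\<in>UNIV. x$s * M s t))"
  have lin: "linear L"
  proof (rule linearI)
    show "L (x + y) = L x + L y" for x y
      by (simp add: L_def vec_eq_iff distrib_right sum.distrib)
    show "L (c *\<^sub>R x) = c *\<^sub>R L x" for c x
      by (simp add: L_def vec_eq_iff sum_distrib_left right_diff_distrib mult.assoc)
  qed
  have sum0: "(\<Sum>t\<in>UNIV. L x $ t) = 0" for x
  proof -
    have "(\<Sum>t\<in>UNIV. L x $ t) = (\<Sum>t\<in>UNIV. x$t) - (\<Sum>t\<in>UNIV. \<Sum>s\<in>UNIV. x$s * M s t)"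
      by (simp add: L_def sum_subtractf)
    also have "(\<Sum>t\<in>UNIV. \<Sum>s\<in>UNIV. x$s * M s t) = (\<Sum>s\<in>UNIV. x$s * (\<Sum>t\<in>UNIV. M s t))"
      by (subst sum.swap) (simp add: sum_distrib_left)
    also have "\<dots> = (\<Sum>s\<in>UNIV. x$s)" using st by (simp add: stoch_def)
    finally show ?thesis by simp
  qed
  have "\<not> surj L"
  proof
    assume "surj L"
    then obtain x where "L x = (\<chi> t. 1)" by (metis surjD)
    then have "(\<Sum>t\<in>UNIV. L x $ t) = real CARD('s)" by simp
    with sum0 show False by simp
  qed
  then have "\<not> inj L" using linear_injective_imp_surjective[OF lin _ refl] by blast
  then obtain x y where xy: "x \<noteq> y" "L x = L y" unfolding inj_def by blast
  define z where "z = x - y"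
  have z0: "z \<noteq> 0" using xy(1) unfolding z_def by simp
  have "L z = L x - L y" unfolding z_def by (rule linear_diff[OF lin])
  then have Lz: "L z = 0" using xy(2) by simp
  have fx: "(\<Sum>s\<in>UNIV. z$s * M s t) = z$t" for t
  proof -
    have "L z $ t = 0" using Lz by simp
    then show ?thesis unfolding L_def by simp
  qed
  define w where "w = (\<lambda>s. \<bar>z$s\<bar>)"
  have ineq: "w t \<le> (\<Sum>s\<in>UNIV. w s * M s t)" for t
  proof -
    have "w t = \<bar>\<Sum>s\<in>UNIV. z$s * M s t\<bar>" using fx by (simp add: w_def)
    also have "\<dots> \<le> (\<Sum>s\<in>UNIV. \<bar>z$s * M s t\<bar>)" by (rule sum_abs)
    also have "\<dots> = (\<Sum>s\<in>UNIV. w s * M s t)" using st by (simp add: w_def abs_mult stoch_def)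
    finally show ?thesis .
  qed
  have eqs: "(\<Sum>t\<in>UNIV. \<Sum>s\<in>UNIV. w s * M s t) = (\<Sum>t\<in>UNIV. w t)"
  proof -
    have "(\<Sum>t\<in>UNIV. \<Sum>s\<in>UNIV. w s * M s t) = (\<Sum>s\<in>UNIV. w s * (\<Sum>t\<in>UNIV. M s t))"
      by (subst sum.swap) (simp add: sum_distrib_left)
    also have "\<dots> = (\<Sum>s\<in>UNIV. w s)" using st by (simp add: stoch_def)
    finally show ?thesis .
  qed
  have "(\<Sum>t\<in>UNIV. (\<Sum>s\<in>UNIV. w s * M s t) - w t) = 0" using eqs by (simp add: sum_subtractf)
  then have eq: "(\<Sum>s\<in>UNIV. w s * M s t) = w t" for t
    using sum_nonneg_eq_0_iff[of UNIV "\<lambda>t. (\<Sum>s\<in>UNIV. w s * M s t) - w t"] ineq by simp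
  obtain t0 where "z$t0 \<noteq> 0" using z0 by (metis vec_eq_iff zero_index)
  then have pos: "0 < (\<Sum>t\<in>UNIV. w t)"
    by (intro sum_pos2[of UNIV t0]) (auto simp: w_def)
  define pd where "pd = (\<lambda>s. w s / (\<Sum>t\<in>UNIV. w t))"
  have "stationary M pd"
    unfolding stationary_def
  proof (intro conjI allI)
    show "0 \<le> pd s" for s using pos by (simp add: pd_def w_def)
    show "(\<Sum>s\<in>UNIV. pd s) = 1" using pos by (simp add: pd_def sum_divide_distrib[symmetric])
    show "(\<Sum>s\<in>UNIV. pd s * M s s') = pd s'" for s'
      using eq[of s'] by (simp add: pd_def sum_divide_distrib[symmetric])
  qed
  then show ?thesis by blast
qed

lemma poisson_exists:
  fixes M :: "'s::finite \<Rightarrow> 's \<Rightarrow> real"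
  assumes st: "stoch M" and irr: "irreducible_chain M" and pd: "stationary M pd"
  shows "\<exists>V. \<forall>s. V s = h s - (\<Sum>t\<in>UNIV. pd t * h t) + (\<Sum>t\<in>UNIV. M s t * V t)"
proof -
  define T where "T = (\<lambda>x::real^'s. \<chi> s. x$s - (\<Sum>t\<in>UNIV. M s t * x$t) + (\<Sum>t\<in>UNIV. pd t * x$t))"
  have lin: "linear T"
  proof (rule linearI)
    show "T (x + y) = T x + T y" for x y
      by (simp add: T_def vec_eq_iff distrib_left sum.distrib)
    show "T (c *\<^sub>R x) = c *\<^sub>R T x" for c x
      by (simp add: T_def vec_eq_iff sum_distrib_left right_diff_distrib distrib_left mult.left_commute)
  qed
  have piT: "(\<Sum>s\<in>UNIV. pd s * T x $ s) = (\<Sum>t\<in>UNIV. pd t * x$t)" for x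
  proof -
    have "(\<Sum>s\<in>UNIV. pd s * T x $ s) = (\<Sum>s\<in>UNIV. pd s * x$s) - (\<Sum>s\<in>UNIV. pd s * (\<Sum>t\<in>UNIV. M s t * x$t))
          + (\<Sum>s\<in>UNIV. pd s) * (\<Sum>t\<in>UNIV. pd t * x$t)"
    proof -
      have "pd s * T x $ s = pd s * x$s - pd s * (\<Sum>t\<in>UNIV. M s t * x$t) + pd s * (\<Sum>t\<in>UNIV. pd t * x$t)" for s
        by (simp add: T_def right_diff_distrib distrib_left)
      then show ?thesis by (simp add: sum.distrib sum_subtractf sum_distrib_right[symmetric])
    qed
    then show ?thesis using stat_apply[OF pd, of "\<lambda>t. x$t"] pd by (simp add: stationary_def)
  qed
  have "inj T"
    unfolding linear_injective_0[OF lin]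
  proof (intro allI impI)
    fix x assume Tx: "T x = 0"
    have c0: "(\<Sum>t\<in>UNIV. pd t * x$t) = 0" using piT[of x] Tx by simp
    have hx: "x$s = (\<Sum>t\<in>UNIV. M s t * x$t)" for s
    proof -
      have "T x $ s = 0" using Tx by simp
      then show ?thesis using c0 unfolding T_def by simp
    qed
    have cst: "x$s = x$s'" for s s' by (rule harmonic_const[OF st irr hx])
    show "x = 0"
    proof (subst vec_eq_iff, intro allI)
      fix s
      have "(\<Sum>t\<in>UNIV. pd t * x$t) = (\<Sum>t\<in>UNIV. pd t) * x$s"
        by (simp add: sum_distrib_right) (rule sum.cong, simp, metis cst)
      then show "x$s = 0$s" using c0 pd by (simp add: stationary_def)
    qed
  qed
  then have "surj T" using linear_injective_imp_surjective[OF lin _ refl] by blast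
  then obtain V where TV: "T V = (\<chi> s. h s - (\<Sum>t\<in>UNIV. pd t * h t))" by (metis surjD)
  have "(\<Sum>t\<in>UNIV. pd t * V$t) = (\<Sum>s\<in>UNIV. pd s * (h s - (\<Sum>t\<in>UNIV. pd t * h t)))"
    using piT[of V] TV by simp
  also have "\<dots> = (\<Sum>s\<in>UNIV. pd s * h s) - (\<Sum>s\<in>UNIV. pd s) * (\<Sum>t\<in>UNIV. pd t * h t)"
    by (simp add: right_diff_distrib sum_subtractf sum_distrib_right)
  also have "\<dots> = 0" using pd by (simp add: stationary_def)
  finally have c0: "(\<Sum>t\<in>UNIV. pd t * V$t) = 0" .
  have "\<forall>s. V$s = h s - (\<Sum>t\<in>UNIV. pd t * h t) + (\<Sum>t\<in>UNIV. M s t * V$t)"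
  proof
    fix s
    have "T V $ s = h s - (\<Sum>t\<in>UNIV. pd t * h t)" using TV by simp
    then show "V$s = h s - (\<Sum>t\<in>UNIV. pd t * h t) + (\<Sum>t\<in>UNIV. M s t * V$t)"
      using c0 by (simp add: T_def)
  qed
  then show ?thesis by blast
qed

lemma stat_unique:
  fixes M :: "'s::finite \<Rightarrow> 's \<Rightarrow> real"
  assumes st: "stoch M" and irr: "irreducible_chain M" and pd: "stationary M pd"
    and pd': "stationary M pd'"
  shows "pd' = pd"
proof
  fix s0
  define h where "h = (\<lambda>s::'s. if s = s0 then 1 else (0::real))"
  obtain V where V: "\<And>s. V s = h s - (\<Sum>t\<in>UNIV. pd t * h t) + (\<Sum>t\<in>UNIV. M s t * V t)"
    using poisson_exists[OF st irr pd, of h] by blast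
  have "(\<Sum>s\<in>UNIV. pd' s * V s) = (\<Sum>s\<in>UNIV. pd' s * h s) - (\<Sum>s\<in>UNIV. pd' s) * (\<Sum>t\<in>UNIV. pd t * h t)
      + (\<Sum>s\<in>UNIV. pd' s * (\<Sum>t\<in>UNIV. M s t * V t))"
    by (subst V) (simp add: algebra_simps sum.distrib sum_subtractf sum_distrib_right)
  also have "\<dots> = pd' s0 - pd s0 + (\<Sum>s\<in>UNIV. pd' s * V s)"
    using stat_apply[OF pd', of V] pd' by (simp add: h_def stationary_def sum_ind)
  finally show "pd' s0 = pd s0" by simp
qed

lemma stat_dist_eq:
  assumes st: "stoch M" and irr: "irreducible_chain M" and pd: "stationary M pd"
  shows "stat_dist M = pd"
proof -
  have "stat_dist M = (THE p. stationary M p)" by (simp add: stat_dist_def stationary_def)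
  also have "\<dots> = pd"
    by (rule the_equality[of "stationary M" pd]) (use pd stat_unique[OF st irr pd] in blast)+
  finally show ?thesis .
qed

lemma stat_pos:
  assumes st: "stoch M" and irr: "irreducible_chain M" and pd: "stationary M pd"
  shows "0 < pd t"
proof -
  have "\<exists>s. 0 < pd s"
  proof (rule ccontr)
    assume "\<not> ?thesis"
    then have "(\<Sum>s\<in>UNIV. pd s) \<le> 0" by (meson not_le sum_nonpos)
    with pd show False by (simp add: stationary_def)
  qed
  then obtain s where s: "0 < pd s" by blast
  obtain n where n: "0 < mpow M n s t" using irr unfolding irreducible_chain_def by blast
  have "pd s * mpow M n s t \<le> (\<Sum>u\<in>UNIV. pd u * mpow M n u t)"
    by (rule member_le_sum) (use pd mpow_nonneg[OF st] in \<open>auto simp: stationary_def\<close>)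
  also have "\<dots> = pd t" using mpow_stat[OF pd] .
  finally show ?thesis using s n by (smt (verit) mult_pos_pos)
qed



lemma finite_jointA: "valid_game A P \<Longrightarrow> finite (jointA A)"
  unfolding valid_game_def jointA_def by (auto intro!: finite_PiE)

lemma jointA_mem: "b \<in> jointA A \<Longrightarrow> b i \<in> A i"
  unfolding jointA_def by auto

lemma jprob_nonneg: "is_joint_policy A mu \<Longrightarrow> 0 \<le> jprob mu s b"
  unfolding jprob_def is_joint_policy_def is_policy_def by (auto intro!: prod_nonneg)

lemma jprob_sum:
  assumes "valid_game A P" "is_joint_policy A mu"
  shows "(\<Sum>b\<in>jointA A. jprob mu s b) = 1"
proof -
  have "(\<Prod>i\<in>UNIV. \<Sum>a\<in>A i. mu i s a) = (\<Sum>b\<in>jointA A. jprob mu s b)"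
    unfolding jointA_def jprob_def
    by (rule prod_sum_PiE) (use assms in \<open>auto simp: valid_game_def\<close>)
  moreover have "(\<Prod>i\<in>UNIV. \<Sum>a\<in>A i. mu i s a) = 1"
    using assms(2) by (simp add: is_joint_policy_def is_policy_def)
  ultimately show ?thesis by simp
qed

lemma jexp_PW:
  "(\<Sum>b\<in>jointA A. jprob mu s b * (\<Sum>t\<in>UNIV. P s b t * W t)) = (\<Sum>t\<in>UNIV. Pmu A P mu s t * W t)"
  unfolding Pmu_def
  by (simp add: sum_distrib_left sum_distrib_right mult.assoc) (rule sum.swap)

lemma Pmu_stoch:
  assumes g: "valid_game A P" and mu: "is_joint_policy A mu"
  shows "stoch (Pmu A P mu)"
  unfolding stoch_def
proof (intro conjI allI)
  fix s t show "0 \<le> Pmu A P mu s t"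
    unfolding Pmu_def using g jprob_nonneg[OF mu] by (auto simp: valid_game_def intro!: sum_nonneg)
next
  fix s
  have "(\<Sum>t\<in>UNIV. Pmu A P mu s t) = (\<Sum>b\<in>jointA A. jprob mu s b * (\<Sum>t\<in>UNIV. P s b t * 1))"
    using jexp_PW[where W="\<lambda>_. 1" and A=A and mu=mu and s=s and P=P] by simp
  also have "\<dots> = (\<Sum>b\<in>jointA A. jprob mu s b)"
    by (rule sum.cong) (use g in \<open>auto simp: valid_game_def\<close>)
  also have "\<dots> = 1" by (rule jprob_sum[OF g mu])
  finally show "(\<Sum>t\<in>UNIV. Pmu A P mu s t) = 1" .
qed

lemma jprob_upd: "jprob (mu(i := q)) s b = q s (b i) * (\<Prod>j\<in>UNIV - {i}. mu j s (b j))"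
  unfolding jprob_def
  by (subst prod.remove[of UNIV i]) (auto intro!: prod.cong)

lemma decomp:
  assumes g: "valid_game A P"
  shows "(\<Sum>b\<in>jointA A. jprob (mu(i := q)) s b * X b)
       = (\<Sum>a\<in>A i. q s a * (\<Sum>b\<in>{b\<in>jointA A. b i = a}. (\<Prod>j\<in>UNIV - {i}. mu j s (b j)) * X b))"
proof -
  have "(\<Sum>a\<in>A i. q s a * (\<Sum>b\<in>{b\<in>jointA A. b i = a}. (\<Prod>j\<in>UNIV - {i}. mu j s (b j)) * X b))
      = (\<Sum>a\<in>A i. (\<Sum>b\<in>{b\<in>jointA A. b i = a}. jprob (mu(i := q)) s b * X b))"
    by (auto simp: sum_distrib_left jprob_upd mult.assoc intro!: sum.cong)
  also have "\<dots> = (\<Sum>b\<in>jointA A. jprob (mu(i := q)) s b * X b)"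
    by (rule sum.group) (use g in \<open>auto simp: finite_jointA valid_game_def jointA_mem\<close>)
  finally show ?thesis by simp
qed

lemma jprob_mix:
  "jprob (mu(i := mix_pol \<delta> (mu i) p)) s b = (1 - \<delta>) * jprob mu s b + \<delta> * jprob (mu(i := p)) s b"
proof -
  have "jprob mu s b = jprob (mu(i := mu i)) s b" by simp
  then show ?thesis by (simp only: jprob_upd) (simp add: mix_pol_def algebra_simps)
qed

lemma det_joint_policy: "(\<And>i s. e i s \<in> A i) \<Longrightarrow> valid_game A P \<Longrightarrow> is_joint_policy A (det_joint e)"
  unfolding is_joint_policy_def is_policy_def det_joint_def valid_game_def
  by (auto simp: sum.delta')

lemma mix_policy:
  assumes "is_policy A i p" "is_policy A i q" "0 \<le> \<delta>" "\<delta> \<le> 1"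
  shows "is_policy A i (mix_pol \<delta> p q)"
  using assms unfolding is_policy_def mix_pol_def
  by (auto simp: sum.distrib sum_distrib_left[symmetric])

lemma det_upd: "det_joint (e(i := c)) = (det_joint e)(i := (\<lambda>s a. if a = c s then 1 else 0))"
  unfolding det_joint_def by (auto simp: fun_eq_iff)



locale mvgame =
  fixes A :: "'i::finite \<Rightarrow> 'a set" and P :: "'s::finite \<Rightarrow> ('i \<Rightarrow> 'a) \<Rightarrow> 's \<Rightarrow> real"
    and r :: "'s \<Rightarrow> ('i \<Rightarrow> 'a) \<Rightarrow> real" and \<beta> :: real
  assumes game: "valid_game A P"
    and ergodic: "\<And>mu. is_joint_policy A mu \<Longrightarrow> ergodic_chain (Pmu A P mu)"
    and beta: "0 \<le> \<beta>"
begin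

abbreviation "sd mu \<equiv> stat_dist (Pmu A P mu)"

lemma irr: "is_joint_policy A mu \<Longrightarrow> irreducible_chain (Pmu A P mu)"
  using ergodic by (simp add: ergodic_chain_def)

lemma stoch: "is_joint_policy A mu \<Longrightarrow> stoch (Pmu A P mu)"
  by (rule Pmu_stoch[OF game])

lemma sd_stat: "is_joint_policy A mu \<Longrightarrow> stationary (Pmu A P mu) (sd mu)"
proof -
  assume mu: "is_joint_policy A mu"
  obtain p where p: "stationary (Pmu A P mu) p" using stat_exists[OF stoch[OF mu]] by blast
  have "sd mu = p" by (rule stat_dist_eq[OF stoch[OF mu] irr[OF mu] p])
  with p show ?thesis by simp
qed

lemma sd_pos: "is_joint_policy A mu \<Longrightarrow> 0 < sd mu s"
  by (rule stat_pos[OF stoch irr sd_stat])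

lemma sd_sum: "is_joint_policy A mu \<Longrightarrow> (\<Sum>s\<in>UNIV. sd mu s) = 1"
  using sd_stat by (simp add: stationary_def)

lemma sd_le1: "is_joint_policy A mu \<Longrightarrow> sd mu s \<le> 1"
proof -
  assume mu: "is_joint_policy A mu"
  have "sd mu s \<le> (\<Sum>s\<in>UNIV. sd mu s)"
    by (rule member_le_sum) (use sd_pos[OF mu] in \<open>auto intro: less_imp_le\<close>)
  then show ?thesis using sd_sum[OF mu] by simp
qed

lemma sd_bound:
  assumes mu: "is_joint_policy A mu"
  shows "\<bar>\<Sum>s\<in>UNIV. sd mu s * f s\<bar> \<le> (\<Sum>s\<in>UNIV. \<bar>f s\<bar>)"
proof -
  have "\<bar>\<Sum>s\<in>UNIV. sd mu s * f s\<bar> \<le> (\<Sum>s\<in>UNIV. \<bar>sd mu s * f s\<bar>)" by (rule sum_abs)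
  also have "\<dots> \<le> (\<Sum>s\<in>UNIV. \<bar>f s\<bar>)"
  proof (rule sum_mono)
    fix s
    have "\<bar>sd mu s * f s\<bar> = sd mu s * \<bar>f s\<bar>" using sd_pos[OF mu, of s] by (simp add: abs_mult)
    also have "\<dots> \<le> 1 * \<bar>f s\<bar>" by (rule mult_right_mono) (use sd_le1[OF mu] in auto)
    finally show "\<bar>sd mu s * f s\<bar> \<le> \<bar>f s\<bar>" by simp
  qed
  finally show ?thesis .
qed

lemma poisson:
  "is_joint_policy A mu \<Longrightarrow>
    \<exists>V. \<forall>s. V s = h s - (\<Sum>t\<in>UNIV. sd mu t * h t) + (\<Sum>t\<in>UNIV. Pmu A P mu s t * V t)"
  by (rule poisson_exists[OF stoch irr sd_stat])

definition E :: "('i \<Rightarrow> 's \<Rightarrow> 'a \<Rightarrow> real) \<Rightarrow> ('s \<Rightarrow> ('i \<Rightarrow> 'a) \<Rightarrow> real) \<Rightarrow> real" where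
  "E mu Y = (\<Sum>s\<in>UNIV. sd mu s * (\<Sum>b\<in>jointA A. jprob mu s b * Y s b))"

lemma E_add: "E mu (\<lambda>s b. X s b + Y s b) = E mu X + E mu Y"
  unfolding E_def by (simp add: distrib_left sum.distrib)

lemma E_diff: "E mu (\<lambda>s b. X s b - Y s b) = E mu X - E mu Y"
  unfolding E_def by (simp add: right_diff_distrib sum_subtractf)

lemma E_cmult: "E mu (\<lambda>s b. c * X s b) = c * E mu X"
  unfolding E_def by (simp add: sum_distrib_left mult.left_commute)

lemma E_const: "is_joint_policy A mu \<Longrightarrow> E mu (\<lambda>s b. c) = c"
proof -
  assume mu: "is_joint_policy A mu"
  have "(\<Sum>b\<in>jointA A. jprob mu s b * c) = c" for s
    using jprob_sum[OF game mu, of s] by (simp add: sum_distrib_right[symmetric])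
  then have "E mu (\<lambda>s b. c) = (\<Sum>s\<in>UNIV. sd mu s * c)" unfolding E_def by simp
  also have "\<dots> = c" using sd_sum[OF mu] by (simp add: sum_distrib_right[symmetric])
  finally show ?thesis .
qed

lemma jexp_form:
  assumes mu: "is_joint_policy A mu"
  shows "(\<Sum>b\<in>jointA A. jprob mu s b * (g s b - c + (\<Sum>t\<in>UNIV. P s b t * W t) - W s))
       = (\<Sum>b\<in>jointA A. jprob mu s b * g s b) - c + (\<Sum>t\<in>UNIV. Pmu A P mu s t * W t) - W s"
proof -
  have "(\<Sum>b\<in>jointA A. jprob mu s b * (g s b - c + (\<Sum>t\<in>UNIV. P s b t * W t) - W s))
     = (\<Sum>b\<in>jointA A. jprob mu s b * g s b) - (\<Sum>b\<in>jointA A. jprob mu s b) * c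
       + (\<Sum>b\<in>jointA A. jprob mu s b * (\<Sum>t\<in>UNIV. P s b t * W t)) - (\<Sum>b\<in>jointA A. jprob mu s b) * W s"
    by (simp add: right_diff_distrib distrib_left sum.distrib sum_subtractf sum_distrib_right)
  then show ?thesis using jprob_sum[OF game mu, of s] jexp_PW[where A=A and mu=mu and s=s and P=P and W=W] by simp
qed

lemma E_tele:
  assumes mu: "is_joint_policy A mu"
  shows "E mu (\<lambda>s b. (\<Sum>t\<in>UNIV. P s b t * W t) - W s) = 0"
proof -
  have "(\<Sum>b\<in>jointA A. jprob mu s b * ((\<Sum>t\<in>UNIV. P s b t * W t) - W s))
        = (\<Sum>t\<in>UNIV. Pmu A P mu s t * W t) - W s" for s
    using jexp_form[OF mu, of s "\<lambda>s b. 0" 0 W] by simp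
  then have "E mu (\<lambda>s b. (\<Sum>t\<in>UNIV. P s b t * W t) - W s)
      = (\<Sum>s\<in>UNIV. sd mu s * (\<Sum>t\<in>UNIV. Pmu A P mu s t * W t)) - (\<Sum>s\<in>UNIV. sd mu s * W s)"
    unfolding E_def by (simp add: right_diff_distrib sum_subtractf)
  also have "\<dots> = 0" using stat_apply[OF sd_stat[OF mu], of W] by simp
  finally show ?thesis .
qed

lemma eta_E: "eta A P r mu = E mu r"
  unfolding eta_def E_def by simp

lemma zeta_E: "zeta A P r mu = E mu (\<lambda>s b. (r s b - eta A P r mu)\<^sup>2)"
  unfolding zeta_def E_def by simp

lemma J_E: "Jmv A P r \<beta> mu = E mu (fmv A P r \<beta> mu)"
proof -
  have "E mu (fmv A P r \<beta> mu) = E mu (\<lambda>s b. r s b - \<beta> * (r s b - eta A P r mu)\<^sup>2)"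
    by (simp add: fmv_def[abs_def])
  also have "\<dots> = eta A P r mu - \<beta> * zeta A P r mu"
    by (simp only: E_diff E_cmult eta_E zeta_E)
  finally show ?thesis by (simp add: Jmv_def)
qed

lemma J_fbar: "Jmv A P r \<beta> mu = (\<Sum>s\<in>UNIV. sd mu s * fbar A P r \<beta> mu s)"
  unfolding J_E E_def fbar_def by simp

lemma Vf_poisson:
  assumes mu: "is_joint_policy A mu"
  shows "Vf A P r \<beta> mu s = fbar A P r \<beta> mu s - Jmv A P r \<beta> mu
                        + (\<Sum>s'\<in>UNIV. Pmu A P mu s s' * Vf A P r \<beta> mu s')"
proof -
  have ex: "\<exists>V. \<forall>s. V s = fbar A P r \<beta> mu s - Jmv A P r \<beta> mu
                        + (\<Sum>s'\<in>UNIV. Pmu A P mu s s' * V s')"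
    using poisson[OF mu, of "fbar A P r \<beta> mu"] unfolding J_fbar .
  show ?thesis using someI_ex[OF ex] unfolding Vf_def by blast
qed

lemma adv_zero:
  assumes mu: "is_joint_policy A mu"
  shows "(\<Sum>b\<in>jointA A. jprob mu s b * Af A P r \<beta> mu s b) = 0"
proof -
  have "(\<Sum>b\<in>jointA A. jprob mu s b * Af A P r \<beta> mu s b)
     = (\<Sum>b\<in>jointA A. jprob mu s b * (fmv A P r \<beta> mu s b - Jmv A P r \<beta> mu
          + (\<Sum>t\<in>UNIV. P s b t * Vf A P r \<beta> mu t) - Vf A P r \<beta> mu s))"
    by (simp add: Af_def Qf_def)
  also have "\<dots> = fbar A P r \<beta> mu s - Jmv A P r \<beta> mu
          + (\<Sum>t\<in>UNIV. Pmu A P mu s t * Vf A P r \<beta> mu t) - Vf A P r \<beta> mu s"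
    unfolding jexp_form[OF mu] fbar_def ..
  also have "\<dots> = 0" using Vf_poisson[OF mu, of s] by simp
  finally show ?thesis .
qed

lemma PDL:
  assumes mu: "is_joint_policy A mu" and mu': "is_joint_policy A mu'"
  shows "Jmv A P r \<beta> mu' = Jmv A P r \<beta> mu + E mu' (Af A P r \<beta> mu)
            + \<beta> * (eta A P r mu' - eta A P r mu)\<^sup>2"
proof -
  define \<eta> where "\<eta> = eta A P r mu"
  define \<eta>' where "\<eta>' = eta A P r mu'"
  define J where "J = Jmv A P r \<beta> mu"
  define V where "V = Vf A P r \<beta> mu"
  have "E mu' (Af A P r \<beta> mu) = E mu' (\<lambda>s b. (fmv A P r \<beta> mu s b - J) + ((\<Sum>t\<in>UNIV. P s b t * V t) - V s))"
    by (simp add: Af_def[abs_def] Qf_def J_def V_def algebra_simps)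
  also have "\<dots> = E mu' (\<lambda>s b. fmv A P r \<beta> mu s b - J) + E mu' (\<lambda>s b. (\<Sum>t\<in>UNIV. P s b t * V t) - V s)"
    by (rule E_add)
  also have "\<dots> = E mu' (fmv A P r \<beta> mu) - J"
    unfolding E_tele[OF mu'] by (simp only: E_diff E_const[OF mu'])
  finally have 1: "E mu' (Af A P r \<beta> mu) = E mu' (fmv A P r \<beta> mu) - J" .
  have pw: "fmv A P r \<beta> mu s b = r s b - \<beta> * (r s b - \<eta>')\<^sup>2 - (2*\<beta>*(\<eta>'-\<eta>)) * (r s b - \<eta>') - \<beta> * (\<eta>'-\<eta>)\<^sup>2" for s b
    by (simp add: fmv_def \<eta>_def power2_eq_square algebra_simps)
  have "E mu' (fmv A P r \<beta> mu) = E mu' (\<lambda>s b. r s b - \<beta> * (r s b - \<eta>')\<^sup>2 - (2*\<beta>*(\<eta>'-\<eta>)) * (r s b - \<eta>') - \<beta> * (\<eta>'-\<eta>)\<^sup>2)"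
    using pw by presburger
  also have "\<dots> = \<eta>' - \<beta> * zeta A P r mu' - (2*\<beta>*(\<eta>'-\<eta>)) * (\<eta>' - \<eta>') - \<beta> * (\<eta>'-\<eta>)\<^sup>2"
    by (simp only: E_diff E_cmult E_const[OF mu'] eta_E[symmetric] \<eta>'_def zeta_E[symmetric])
  also have "\<dots> = Jmv A P r \<beta> mu' - \<beta> * (\<eta>'-\<eta>)\<^sup>2" by (simp add: Jmv_def \<eta>'_def)
  finally have 2: "E mu' (fmv A P r \<beta> mu) = Jmv A P r \<beta> mu' - \<beta> * (\<eta>'-\<eta>)\<^sup>2" .
  show ?thesis using 1 2 by (simp add: J_def \<eta>_def \<eta>'_def)
qed

lemma jexp_upd_adv:
  "(\<Sum>b\<in>jointA A. jprob (mu(i:=q)) s b * Af A P r \<beta> mu s b) = (\<Sum>a\<in>A i. q s a * exp_adv A P r \<beta> mu i s a)"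
  by (simp add: decomp[OF game] exp_adv_def)

lemma self_adv_zero:
  assumes mu: "is_joint_policy A mu"
  shows "(\<Sum>a\<in>A i. mu i s a * exp_adv A P r \<beta> mu i s a) = 0"
  using adv_zero[OF mu, of s] jexp_upd_adv[of mu i "mu i" s] by simp

lemma sum_det: "x \<in> S \<Longrightarrow> finite S \<Longrightarrow> (\<Sum>a\<in>S. (if a = x then 1 else 0) * X a) = (X x :: real)"
proof -
  assume "x \<in> S" "finite S"
  moreover have "(\<Sum>a\<in>S. (if a = x then 1 else 0) * X a) = (\<Sum>a\<in>S. if a = x then X a else 0)"
    by (rule sum.cong) auto
  ultimately show ?thesis by simp
qed

lemma det_adv_zero:
  assumes e: "\<And>j s. e j s \<in> A j"
  shows "exp_adv A P r \<beta> (det_joint e) i s (e i s) = 0"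
proof -
  have "0 = (\<Sum>a\<in>A i. det_joint e i s a * exp_adv A P r \<beta> (det_joint e) i s a)"
    using self_adv_zero[OF det_joint_policy[OF e game]] by simp
  also have "\<dots> = exp_adv A P r \<beta> (det_joint e) i s (e i s)"
    unfolding det_joint_def by (rule sum_det) (use e game in \<open>auto simp: valid_game_def\<close>)
  finally show ?thesis by simp
qed

end


context mvgame
begin

lemma step_mono:
  assumes e: "\<And>j s. e j s \<in> A j" and c: "\<And>s. c s \<in> A i"
    and opt: "\<And>s. exp_adv A P r \<beta> (det_joint e) i s (e i s) \<le> exp_adv A P r \<beta> (det_joint e) i s (c s)"
  shows "Jmv A P r \<beta> (det_joint e) \<le> Jmv A P r \<beta> (det_joint (e(i:=c)))"
    and "(\<exists>s. exp_adv A P r \<beta> (det_joint e) i s (e i s) < exp_adv A P r \<beta> (det_joint e) i s (c s))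
          \<Longrightarrow> Jmv A P r \<beta> (det_joint e) < Jmv A P r \<beta> (det_joint (e(i:=c)))"
proof -
  define mu where "mu = det_joint e"
  define mu' where "mu' = det_joint (e(i:=c))"
  have e': "\<And>j s. (e(i:=c)) j s \<in> A j" using e c by auto
  have jmu: "is_joint_policy A mu" unfolding mu_def by (rule det_joint_policy[OF e game])
  have jmu': "is_joint_policy A mu'" unfolding mu'_def by (rule det_joint_policy[OF e' game])
  have mu'eq: "mu' = mu(i := (\<lambda>s a. if a = c s then 1 else 0))"
    unfolding mu_def mu'_def by (rule det_upd)
  define G where "G s = exp_adv A P r \<beta> mu i s (c s)" for s
  have G0: "0 \<le> G s" for s
    using opt[of s] det_adv_zero[where e=e and i=i and s=s, OF e] unfolding G_def mu_def by simp
  have "E mu' (Af A P r \<beta> mu) = (\<Sum>s\<in>UNIV. sd mu' s * G s)"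
  proof -
    have "(\<Sum>b\<in>jointA A. jprob mu' s b * Af A P r \<beta> mu s b) = G s" for s
    proof -
      have "(\<Sum>b\<in>jointA A. jprob mu' s b * Af A P r \<beta> mu s b)
          = (\<Sum>a\<in>A i. (if a = c s then 1 else 0) * exp_adv A P r \<beta> mu i s a)"
        unfolding mu'eq by (rule jexp_upd_adv)
      also have "\<dots> = G s" unfolding G_def
        by (rule sum_det) (use c game in \<open>auto simp: valid_game_def\<close>)
      finally show ?thesis .
    qed
    then show ?thesis unfolding E_def by simp
  qed
  then have PD: "Jmv A P r \<beta> mu' = Jmv A P r \<beta> mu + (\<Sum>s\<in>UNIV. sd mu' s * G s)
            + \<beta> * (eta A P r mu' - eta A P r mu)\<^sup>2"
    using PDL[OF jmu jmu'] by simp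
  have sq: "0 \<le> \<beta> * (eta A P r mu' - eta A P r mu)\<^sup>2" using beta by simp
  have nn: "0 \<le> sd mu' s * G s" for s using sd_pos[OF jmu', of s] G0[of s] by simp
  have "0 \<le> (\<Sum>s\<in>UNIV. sd mu' s * G s)" by (rule sum_nonneg) (use nn in auto)
  then show "Jmv A P r \<beta> (det_joint e) \<le> Jmv A P r \<beta> (det_joint (e(i:=c)))"
    using PD sq unfolding mu_def mu'_def by linarith
  assume "\<exists>s. exp_adv A P r \<beta> (det_joint e) i s (e i s) < exp_adv A P r \<beta> (det_joint e) i s (c s)"
  then obtain s0 where "exp_adv A P r \<beta> mu i s0 (e i s0) < G s0" unfolding G_def mu_def by blast
  then have "0 < G s0" using det_adv_zero[where e=e and i=i and s=s0, OF e] unfolding mu_def by simp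
  then have "0 < sd mu' s0 * G s0" using sd_pos[OF jmu', of s0] by simp
  then have "0 < (\<Sum>s\<in>UNIV. sd mu' s * G s)"
    by (intro sum_pos2[of UNIV s0]) (use nn in auto)
  then show "Jmv A P r \<beta> (det_joint e) < Jmv A P r \<beta> (det_joint (e(i:=c)))"
    using PD sq unfolding mu_def mu'_def by linarith
qed


lemma jexp_mix0:
  "(\<Sum>b\<in>jointA A. jprob (mu(i := mix_pol \<delta> (mu i) p)) s b * Y b)
   = (1 - \<delta>) * (\<Sum>b\<in>jointA A. jprob mu s b * Y b) + \<delta> * (\<Sum>b\<in>jointA A. jprob (mu(i := p)) s b * Y b)"
  by (simp add: jprob_mix distrib_right sum.distrib sum_distrib_left mult.assoc)

lemma fos:
  assumes e: "\<And>j s. e j s \<in> A j"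
    and opt: "\<And>i s a. a \<in> A i \<Longrightarrow> exp_adv A P r \<beta> (det_joint e) i s a \<le> exp_adv A P r \<beta> (det_joint e) i s (e i s)"
  shows "first_order_stationary A P r \<beta> (det_joint e)"
  unfolding first_order_stationary_def
proof (intro allI impI)
  fix i and p :: "'s \<Rightarrow> 'a \<Rightarrow> real" assume pol: "is_policy A i p"
  define mu where "mu = det_joint e"
  define md where "md \<delta> = mu(i := mix_pol \<delta> (mu i) p)" for \<delta>
  define mp where "mp = mu(i := p)"
  have jmu: "is_joint_policy A mu" unfolding mu_def by (rule det_joint_policy[OF e game])
  have jmp: "is_joint_policy A mp" using jmu pol unfolding mp_def is_joint_policy_def by auto
  have jmd: "is_joint_policy A (md \<delta>)" if "0 \<le> \<delta>" "\<delta> \<le> 1" for \<delta>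
    using jmu pol mix_policy[of A i "mu i" p \<delta>] that unfolding md_def is_joint_policy_def by auto
  have md0: "md 0 = mu" unfolding md_def mix_pol_def by simp
  have jm: "(\<Sum>b\<in>jointA A. jprob (md \<delta>) s b * Y b) = (1 - \<delta>) * (\<Sum>b\<in>jointA A. jprob mu s b * Y b)
      + \<delta> * (\<Sum>b\<in>jointA A. jprob mp s b * Y b)" for \<delta> s Y
    unfolding md_def mp_def by (rule jexp_mix0)
  have Pm: "Pmu A P (md \<delta>) s t = (1 - \<delta>) * Pmu A P mu s t + \<delta> * Pmu A P mp s t" for \<delta> s t
    unfolding Pmu_def by (rule jm)
  have zm: "(\<Sum>b\<in>jointA A. jprob (md \<delta>) s b * X s b) = \<delta> * (\<Sum>b\<in>jointA A. jprob mp s b * X s b)"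
    if "\<And>s. (\<Sum>b\<in>jointA A. jprob mu s b * X s b) = 0" for \<delta> s X
    using jm[of \<delta> s "X s"] that[of s] by simp
  define g where "g s = (\<Sum>b\<in>jointA A. jprob mp s b * Af A P r \<beta> mu s b)" for s
  have gle: "g s \<le> 0" for s
  proof -
    have "g s = (\<Sum>a\<in>A i. p s a * exp_adv A P r \<beta> mu i s a)" unfolding g_def mp_def by (rule jexp_upd_adv)
    also have "\<dots> \<le> (\<Sum>a\<in>A i. p s a * exp_adv A P r \<beta> mu i s (e i s))"
      by (rule sum_mono, rule mult_left_mono) (use opt pol in \<open>auto simp: mu_def is_policy_def\<close>)
    also have "\<dots> = 0" using det_adv_zero[where e=e and i=i and s=s, OF e] by (simp add: mu_def)
    finally show ?thesis .
  qed
  define hr where "hr s = (\<Sum>b\<in>jointA A. jprob mu s b * r s b)" for s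
  obtain W where W: "\<And>s. W s = hr s - (\<Sum>t\<in>UNIV. sd mu t * hr t) + (\<Sum>t\<in>UNIV. Pmu A P mu s t * W t)"
    using poisson[OF jmu, of hr] by blast
  define \<eta> where "\<eta> = eta A P r mu"
  have etah: "(\<Sum>t\<in>UNIV. sd mu t * hr t) = \<eta>" unfolding \<eta>_def eta_def hr_def ..
  define Ar where "Ar = (\<lambda>s b. (r s b - \<eta>) + ((\<Sum>t\<in>UNIV. P s b t * W t) - W s))"
  have Ar_alt: "Ar s b = r s b - \<eta> + (\<Sum>t\<in>UNIV. P s b t * W t) - W s" for s b
    unfolding Ar_def by linarith
  have Ar0: "(\<Sum>b\<in>jointA A. jprob mu s b * Ar s b) = 0" for s
  proof -
    have "hr s - \<eta> + (\<Sum>t\<in>UNIV. Pmu A P mu s t * W t) - W s = 0" using W[of s] etah by linarith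
    then show ?thesis unfolding Ar_alt jexp_form[OF jmu] hr_def .
  qed
  define gr where "gr s = (\<Sum>b\<in>jointA A. jprob mp s b * Ar s b)" for s
  have Edelta: "E (md \<delta>) X = \<delta> * (\<Sum>s\<in>UNIV. sd (md \<delta>) s * (\<Sum>b\<in>jointA A. jprob mp s b * X s b))"
    if "\<And>s. (\<Sum>b\<in>jointA A. jprob mu s b * X s b) = 0" for \<delta> X
    unfolding E_def zm[OF that] by (simp add: sum_distrib_left mult.left_commute)
  have eta_d: "eta A P r (md \<delta>) - \<eta> = \<delta> * (\<Sum>s\<in>UNIV. sd (md \<delta>) s * gr s)"
    if d: "0 \<le> \<delta>" "\<delta> \<le> 1" for \<delta>
  proof -
    have "E (md \<delta>) Ar = E (md \<delta>) (\<lambda>s b. r s b - \<eta>) + E (md \<delta>) (\<lambda>s b. (\<Sum>t\<in>UNIV. P s b t * W t) - W s)"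
      unfolding Ar_def by (rule E_add)
    also have "\<dots> = eta A P r (md \<delta>) - \<eta>"
      unfolding E_tele[OF jmd[OF d]] by (simp only: E_diff E_const[OF jmd[OF d]] eta_E)
    finally show ?thesis using Edelta[of Ar \<delta>] Ar0 unfolding gr_def by simp
  qed
  have EA: "E (md \<delta>) (Af A P r \<beta> mu) = \<delta> * (\<Sum>s\<in>UNIV. sd (md \<delta>) s * g s)" for \<delta>
    using Edelta[of "Af A P r \<beta> mu" \<delta>] adv_zero[OF jmu] unfolding g_def by simp
  define c where "c = (\<Sum>s\<in>UNIV. sd mu s * g s)"
  obtain Vg where Vg: "\<And>s. Vg s = g s - c + (\<Sum>t\<in>UNIV. Pmu A P mu s t * Vg t)"
    using poisson[OF jmu, of g] unfolding c_def by blast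
  define k where "k s = (\<Sum>t\<in>UNIV. Pmu A P mp s t * Vg t) - (\<Sum>t\<in>UNIV. Pmu A P mu s t * Vg t)" for s
  have Sg: "(\<Sum>s\<in>UNIV. sd (md \<delta>) s * g s) = c + \<delta> * (\<Sum>s\<in>UNIV. sd (md \<delta>) s * k s)"
    if d: "0 \<le> \<delta>" "\<delta> \<le> 1" for \<delta>
  proof -
    define q where "q = sd (md \<delta>)"
    define X where "X s = (\<Sum>t\<in>UNIV. Pmu A P mu s t * Vg t)" for s
    have qst: "stationary (Pmu A P (md \<delta>)) q" unfolding q_def by (rule sd_stat[OF jmd[OF d]])
    have q1: "(\<Sum>s\<in>UNIV. q s) = 1" using qst by (simp add: stationary_def)
    have PV: "(\<Sum>t\<in>UNIV. Pmu A P (md \<delta>) s t * Vg t) = X s + \<delta> * k s" for s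
    proof -
      have "(\<Sum>t\<in>UNIV. Pmu A P (md \<delta>) s t * Vg t)
          = (\<Sum>t\<in>UNIV. (1 - \<delta>) * (Pmu A P mu s t * Vg t) + \<delta> * (Pmu A P mp s t * Vg t))"
        by (rule sum.cong) (simp_all add: Pm distrib_right)
      also have "\<dots> = (1 - \<delta>) * X s + \<delta> * (\<Sum>t\<in>UNIV. Pmu A P mp s t * Vg t)"
        by (simp add: sum.distrib sum_distrib_left X_def)
      also have "\<dots> = X s + \<delta> * k s" by (simp add: k_def X_def algebra_simps)
      finally show ?thesis .
    qed
    have gX: "g s = Vg s - X s + c" for s using Vg[of s] unfolding X_def by linarith
    have "(\<Sum>s\<in>UNIV. q s * g s) = (\<Sum>s\<in>UNIV. q s * Vg s) - (\<Sum>s\<in>UNIV. q s * X s) + (\<Sum>s\<in>UNIV. q s) * c"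
      unfolding gX by (simp add: distrib_left right_diff_distrib sum.distrib sum_subtractf sum_distrib_right)
    also have "(\<Sum>s\<in>UNIV. q s * Vg s) = (\<Sum>s\<in>UNIV. q s * (\<Sum>t\<in>UNIV. Pmu A P (md \<delta>) s t * Vg t))"
      using stat_apply[OF qst, of Vg] by simp
    also have "\<dots> = (\<Sum>s\<in>UNIV. q s * X s) + \<delta> * (\<Sum>s\<in>UNIV. q s * k s)"
      unfolding PV by (simp add: distrib_left sum.distrib sum_distrib_left mult.left_commute)
    finally show ?thesis using q1 unfolding q_def by simp
  qed
  define B where "B = (\<Sum>s\<in>UNIV. \<bar>k s\<bar>) + \<beta> * (\<Sum>s\<in>UNIV. \<bar>gr s\<bar>)\<^sup>2"
  define f where "f \<delta> = Jmv A P r \<beta> (md \<delta>)" for \<delta>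
  have fdiff: "f \<delta> - f 0 = \<delta> * c + \<delta>\<^sup>2 * ((\<Sum>s\<in>UNIV. sd (md \<delta>) s * k s) + \<beta> * (\<Sum>s\<in>UNIV. sd (md \<delta>) s * gr s)\<^sup>2)"
    if d: "0 \<le> \<delta>" "\<delta> \<le> 1" for \<delta>
  proof -
    have "f \<delta> = Jmv A P r \<beta> mu + E (md \<delta>) (Af A P r \<beta> mu) + \<beta> * (eta A P r (md \<delta>) - eta A P r mu)\<^sup>2"
      unfolding f_def by (rule PDL[OF jmu jmd[OF d]])
    also have "\<dots> = Jmv A P r \<beta> mu + \<delta> * (c + \<delta> * (\<Sum>s\<in>UNIV. sd (md \<delta>) s * k s))
        + \<beta> * (\<delta> * (\<Sum>s\<in>UNIV. sd (md \<delta>) s * gr s))\<^sup>2"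
      unfolding EA Sg[OF d] eta_d[OF d, symmetric] \<eta>_def ..
    finally show ?thesis unfolding f_def md0 by (simp add: power2_eq_square algebra_simps)
  qed
  have bound: "\<bar>(f \<delta> - f 0) / (\<delta> - 0) - c\<bar> \<le> B * \<bar>\<delta>\<bar>" if d: "0 < \<delta>" "\<delta> \<le> 1" for \<delta>
  proof -
    have d': "0 \<le> \<delta>" using d by simp
    define Sk where "Sk = (\<Sum>s\<in>UNIV. sd (md \<delta>) s * k s)"
    define Sr where "Sr = (\<Sum>s\<in>UNIV. sd (md \<delta>) s * gr s)"
    have "(f \<delta> - f 0) / (\<delta> - 0) - c = \<delta> * (Sk + \<beta> * Sr\<^sup>2)"
      unfolding fdiff[OF d' d(2)] Sk_def[symmetric] Sr_def[symmetric] using d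
      by (simp add: power2_eq_square field_simps)
    moreover have "\<bar>Sk\<bar> \<le> (\<Sum>s\<in>UNIV. \<bar>k s\<bar>)" unfolding Sk_def by (rule sd_bound[OF jmd[OF d' d(2)]])
    moreover have "\<bar>Sr\<bar> \<le> (\<Sum>s\<in>UNIV. \<bar>gr s\<bar>)" unfolding Sr_def by (rule sd_bound[OF jmd[OF d' d(2)]])
    then have "Sr\<^sup>2 \<le> (\<Sum>s\<in>UNIV. \<bar>gr s\<bar>)\<^sup>2"
      by (metis abs_ge_zero power2_abs power_mono)
    ultimately have e1: "(f \<delta> - f 0) / (\<delta> - 0) - c = \<delta> * (Sk + \<beta> * Sr\<^sup>2)"
      and b1: "\<bar>Sk\<bar> \<le> (\<Sum>s\<in>UNIV. \<bar>k s\<bar>)" and b2: "Sr\<^sup>2 \<le> (\<Sum>s\<in>UNIV. \<bar>gr s\<bar>)\<^sup>2" by blast+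
    have b3: "\<beta> * Sr\<^sup>2 \<le> \<beta> * (\<Sum>s\<in>UNIV. \<bar>gr s\<bar>)\<^sup>2" by (rule mult_left_mono[OF b2 beta])
    have b4: "\<bar>\<beta> * Sr\<^sup>2\<bar> = \<beta> * Sr\<^sup>2" using beta by simp
    have "\<bar>Sk + \<beta> * Sr\<^sup>2\<bar> \<le> \<bar>Sk\<bar> + \<bar>\<beta> * Sr\<^sup>2\<bar>" by (rule abs_triangle_ineq)
    then have b5: "\<bar>Sk + \<beta> * Sr\<^sup>2\<bar> \<le> B" unfolding B_def using b1 b3 b4 by linarith
    have "\<bar>(f \<delta> - f 0) / (\<delta> - 0) - c\<bar> = \<delta> * \<bar>Sk + \<beta> * Sr\<^sup>2\<bar>" unfolding e1 using d by (simp add: abs_mult)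
    also have "\<dots> \<le> \<delta> * B" by (rule mult_left_mono[OF b5]) (use d in simp)
    finally have "\<bar>(f \<delta> - f 0) / (\<delta> - 0) - c\<bar> \<le> \<delta> * B" .
    then show ?thesis using d by (simp add: mult.commute)
  qed
  have "(f has_real_derivative c) (at 0 within {0..1})"
    unfolding has_field_derivative_iff
  proof (subst Lim_null, rule Lim_null_comparison)
    show "\<forall>\<^sub>F x in at 0 within {0..1}. norm ((f x - f 0) / (x - 0) - c) \<le> B * \<bar>x\<bar>"
      unfolding eventually_at_filter
      by (rule always_eventually) (use bound in auto)
    have "((\<lambda>x. B * \<bar>x\<bar>) \<longlongrightarrow> B * \<bar>0\<bar>) (at 0 within {0..1::real})"
      by (intro tendsto_intros)
    then show "((\<lambda>x. B * \<bar>x\<bar>) \<longlongrightarrow> 0) (at 0 within {0..1::real})" by simp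
  qed
  moreover have "c \<le> 0" unfolding c_def
    by (rule sum_nonpos) (use gle sd_pos[OF jmu] in \<open>auto simp: mult_nonneg_nonpos less_imp_le\<close>)
  moreover have "f = (\<lambda>\<delta>. Jmv A P r \<beta> ((det_joint e)(i := mix_pol \<delta> (det_joint e i) p)))"
    unfolding f_def md_def mu_def ..
  ultimately show "\<exists>D. ((\<lambda>\<delta>. Jmv A P r \<beta> ((det_joint e)(i := mix_pol \<delta> (det_joint e i) p))) has_real_derivative D)
                (at 0 within {0..1}) \<and> D \<le> 0" by blast
qed

end


lemma distinct_nth_notin_take: "distinct xs \<Longrightarrow> h < length xs \<Longrightarrow> xs ! h \<notin> set (take h xs)"
  by (auto simp: in_set_conv_nth distinct_conv_nth)

theorem theorem2:
  fixes A :: "'i::finite \<Rightarrow> 'a set"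
    and P :: "'s::finite \<Rightarrow> ('i \<Rightarrow> 'a) \<Rightarrow> 's \<Rightarrow> real"
    and r :: "'s \<Rightarrow> ('i \<Rightarrow> 'a) \<Rightarrow> real"
    and \<beta> :: real
    and d :: "nat \<Rightarrow> 'i \<Rightarrow> 's \<Rightarrow> 'a"
    and perm :: "nat \<Rightarrow> 'i list"
  assumes game: "valid_game A P"
    and ergodic: "\<And>mu. is_joint_policy A mu \<Longrightarrow> ergodic_chain (Pmu A P mu)"
    and beta: "0 \<le> \<beta>"
    and run: "mvmapi_run A P r \<beta> d perm"
  shows "(\<forall>k h. h < CARD('i) \<longrightarrow>
            Jmv A P r \<beta> (det_joint (hat_pol d perm k h))
              \<le> Jmv A P r \<beta> (det_joint (hat_pol d perm k (Suc h))))
       \<and> (\<forall>k. Jmv A P r \<beta> (det_joint (d k)) \<le> Jmv A P r \<beta> (det_joint (d (Suc k))))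
       \<and> (\<exists>K. \<forall>k\<ge>K. d k = d K)
       \<and> (\<forall>K. d (Suc K) = d K \<longrightarrow> first_order_stationary A P r \<beta> (det_joint (d K)))"
proof -
  interpret mvgame A P r \<beta> using game ergodic beta by (simp add: mvgame_def)
  let ?J = "\<lambda>e. Jmv A P r \<beta> (det_joint e)"
  let ?X = "\<lambda>e i s a. exp_adv A P r \<beta> (det_joint e) i s a"
  have d0: "\<And>i s. d 0 i s \<in> A i" using run unfolding mvmapi_run_def by blast
  have pm: "distinct (perm k)" "set (perm k) = UNIV" for k using run unfolding mvmapi_run_def by blast+
  have R: "d (Suc k) (perm k ! h) s \<in> A (perm k ! h)
      \<and> (\<forall>a\<in>A (perm k ! h). ?X (hat_pol d perm k h) (perm k ! h) s a \<le> ?X (hat_pol d perm k h) (perm k ! h) s (d (Suc k) (perm k ! h) s))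
      \<and> ((\<forall>a\<in>A (perm k ! h). ?X (hat_pol d perm k h) (perm k ! h) s a \<le> ?X (hat_pol d perm k h) (perm k ! h) s (d k (perm k ! h) s))
           \<longrightarrow> d (Suc k) (perm k ! h) s = d k (perm k ! h) s)"
    if "h < length (perm k)" for k h s
    using run that unfolding mvmapi_run_def Let_def by blast
  have len: "length (perm k) = CARD('i)" for k
    using distinct_card[OF pm(1)[of k]] pm(2)[of k] by simp
  have idx: "\<exists>h<length (perm k). perm k ! h = i" for k i
    using pm(2)[of k] by (metis UNIV_I in_set_conv_nth)
  have valid: "d k i s \<in> A i" for k i s
  proof (induction k arbitrary: i s)
    case 0 then show ?case by (rule d0)
  next
    case (Suc k)
    obtain h where "h < length (perm k)" "perm k ! h = i" using idx by blast
    then show ?case using R[of h k s] by blast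
  qed
  have hvalid: "hat_pol d perm k h j s \<in> A j" for k h j s
    unfolding hat_pol_def using valid by auto
  have hat0: "hat_pol d perm k 0 = d k" for k unfolding hat_pol_def by simp
  have hatN: "hat_pol d perm k (length (perm k)) = d (Suc k)" for k
    unfolding hat_pol_def using pm(2)[of k] by simp
  have hatS: "hat_pol d perm k (Suc h) = (hat_pol d perm k h)(perm k ! h := d (Suc k) (perm k ! h))"
    if "h < length (perm k)" for k h
    using that by (auto simp: hat_pol_def take_Suc_conv_app_nth fun_eq_iff)
  have hat_at: "hat_pol d perm k h (perm k ! h) = d k (perm k ! h)" if "h < length (perm k)" for k h
    using distinct_nth_notin_take[OF pm(1) that] unfolding hat_pol_def by simp
  have step: "?J (hat_pol d perm k h) \<le> ?J (hat_pol d perm k (Suc h))"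
    and step_strict: "(\<exists>s. d (Suc k) (perm k ! h) s \<noteq> d k (perm k ! h) s) \<Longrightarrow>
        ?J (hat_pol d perm k h) < ?J (hat_pol d perm k (Suc h))"
    if h: "h < length (perm k)" for k h
  proof -
    define i where "i = perm k ! h"
    define e where "e = hat_pol d perm k h"
    define c where "c = d (Suc k) i"
    have ei: "e i s = d k i s" for s unfolding e_def i_def using hat_at[OF h] by simp
    have ev: "\<And>j s. e j s \<in> A j" unfolding e_def by (rule hvalid)
    have cv: "\<And>s. c s \<in> A i" unfolding c_def by (rule valid)
    have Rk: "(\<forall>a\<in>A i. ?X e i s a \<le> ?X e i s (c s))
      \<and> ((\<forall>a\<in>A i. ?X e i s a \<le> ?X e i s (d k i s)) \<longrightarrow> c s = d k i s)" for s
      using R[OF h, of s] unfolding i_def e_def c_def by blast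
    have opt: "?X e i s (e i s) \<le> ?X e i s (c s)" for s
      using Rk[of s] valid[of k i s] unfolding ei by blast
    have eS: "hat_pol d perm k (Suc h) = e(i := c)" unfolding e_def i_def c_def by (rule hatS[OF h])
    show "?J (hat_pol d perm k h) \<le> ?J (hat_pol d perm k (Suc h))"
      unfolding eS using step_mono(1)[OF ev cv opt] unfolding e_def .
    assume "\<exists>s. d (Suc k) (perm k ! h) s \<noteq> d k (perm k ! h) s"
    then obtain s where s: "c s \<noteq> d k i s" unfolding c_def i_def by blast
    then obtain a where a: "a \<in> A i" "?X e i s (d k i s) < ?X e i s a" using Rk[of s] by force
    then have "?X e i s (e i s) < ?X e i s (c s)" using Rk[of s] unfolding ei by force
    then show "?J (hat_pol d perm k h) < ?J (hat_pol d perm k (Suc h))"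
      unfolding eS using step_mono(2)[OF ev cv opt] unfolding e_def by blast
  qed
  have chain: "h + m \<le> length (perm k) \<Longrightarrow> ?J (hat_pol d perm k h) \<le> ?J (hat_pol d perm k (h + m))" for k h m
  proof (induction m)
    case 0 then show ?case by simp
  next
    case (Suc m)
    then have "?J (hat_pol d perm k h) \<le> ?J (hat_pol d perm k (h + m))" by simp
    also have "\<dots> \<le> ?J (hat_pol d perm k (Suc (h + m)))" using Suc.prems by (intro step) simp
    finally show ?case by simp
  qed
  have mono: "?J (d k) \<le> ?J (d (Suc k))" for k
    using chain[of 0 "length (perm k)" k] hat0[of k] hatN[of k] by simp
  have strict: "d (Suc k) \<noteq> d k \<Longrightarrow> ?J (d k) < ?J (d (Suc k))" for k
  proof -
    assume "d (Suc k) \<noteq> d k"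
    then obtain i s where "d (Suc k) i s \<noteq> d k i s" by (meson ext)
    moreover obtain h where h: "h < length (perm k)" "perm k ! h = i" using idx by blast
    ultimately have "?J (hat_pol d perm k h) < ?J (hat_pol d perm k (Suc h))"
      using step_strict[OF h(1)] by blast
    moreover have "?J (hat_pol d perm k 0) \<le> ?J (hat_pol d perm k h)" using chain[of 0 h k] h by simp
    moreover have "?J (hat_pol d perm k (Suc h)) \<le> ?J (hat_pol d perm k (length (perm k)))"
    proof -
      have eq: "Suc h + (length (perm k) - Suc h) = length (perm k)" using h by simp
      show ?thesis using chain[of "Suc h" "length (perm k) - Suc h" k] unfolding eq by simp
    qed
    ultimately show ?thesis unfolding hat0 hatN by linarith
  qed
  have hat_fix: "d (Suc k) = d k \<Longrightarrow> hat_pol d perm k h = d k" for k h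
    unfolding hat_pol_def by auto
  have opt_fix: "?X (d k) i s a \<le> ?X (d k) i s (d k i s)"
    if fx: "d (Suc k) = d k" and a: "a \<in> A i" for k i s a
  proof -
    obtain h where h: "h < length (perm k)" "perm k ! h = i" using idx by blast
    show ?thesis using R[OF h(1), of s] a fx unfolding h(2) hat_fix[OF fx] by (metis)
  qed
  have stab: "d (Suc (Suc k)) = d (Suc k)" if fx: "d (Suc k) = d k" for k
  proof -
    have "h \<le> length (perm (Suc k)) \<Longrightarrow> hat_pol d perm (Suc k) h = d (Suc k)" for h
    proof (induction h)
      case 0 then show ?case using hat0 by blast
    next
      case (Suc h)
      then have h: "h < length (perm (Suc k))" and IH: "hat_pol d perm (Suc k) h = d (Suc k)" by simp_all
      define i where "i = perm (Suc k) ! h"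
      have "d (Suc (Suc k)) i s = d (Suc k) i s" for s
      proof -
        have "\<forall>a\<in>A i. ?X (d (Suc k)) i s a \<le> ?X (d (Suc k)) i s (d (Suc k) i s)"
          using opt_fix[OF fx] unfolding fx by blast
        then show ?thesis using R[OF h, of s] unfolding IH i_def[symmetric] by blast
      qed
      then have "d (Suc (Suc k)) i = d (Suc k) i" by (rule ext)
      then show ?case unfolding hatS[OF h] IH i_def[symmetric] by simp
    qed
    from this[of "length (perm (Suc k))"] show ?thesis unfolding hatN by simp
  qed
  have part1: "\<forall>k h. h < CARD('i) \<longrightarrow> ?J (hat_pol d perm k h) \<le> ?J (hat_pol d perm k (Suc h))"
    using step len by metis
  have part3: "\<exists>K. \<forall>k\<ge>K. d k = d K"
  proof (cases "\<exists>K. d (Suc K) = d K")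
    case True
    then obtain K where K: "d (Suc K) = d K" by blast
    have s1: "d (Suc (K + n)) = d (K + n)" for n
      by (induction n) (use K stab in auto)
    have s2: "d (K + n) = d K" for n
      by (induction n) (use s1 in auto)
    show ?thesis by (intro exI[of _ K] allI impI) (metis le_add_diff_inverse s2)
  next
    case False
    then have "?J (d k) < ?J (d (Suc k))" for k using strict by blast
    then have sm: "strict_mono (\<lambda>k. ?J (d k))" by (rule strict_monoI_Suc)
    then have "inj (\<lambda>k. ?J (d k))" by (rule strict_mono_imp_inj_on)
    then have injd: "inj d" by (metis (mono_tags, lifting) injD injI)
    define F where "F = PiE UNIV (\<lambda>i. PiE UNIV (\<lambda>s::'s. A i))"
    have "finite F" unfolding F_def using game by (auto simp: valid_game_def intro!: finite_PiE)
    moreover have "range d \<subseteq> F" unfolding F_def using valid by auto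
    ultimately have "finite (range d)" by (rule finite_subset[rotated])
    then have "finite (UNIV :: nat set)" using finite_imageD[OF _ injd] by blast
    then show ?thesis by simp
  qed
  have part4: "\<forall>K. d (Suc K) = d K \<longrightarrow> first_order_stationary A P r \<beta> (det_joint (d K))"
  proof (intro allI impI)
    fix K assume fx: "d (Suc K) = d K"
    show "first_order_stationary A P r \<beta> (det_joint (d K))"
      by (rule fos) (use valid opt_fix[OF fx] in auto)
  qed
  show ?thesis using part1 mono part3 part4 by blast
qed


end
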